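(* Let $q$ and $r$ be integers with $4\le q<r+3$. Then (a) $F_v(2_r;q-1)\ge F_v(2_r;q)+1$; (b) if $F_v(2_r;q)+1\ge R(q-1,3)$, then $F_v(2_r;q-1)\ge F_v(2_r;q)+2$.
   Context: All graphs are finite, simple and undirected. $\mathrm{cl}(G)$ is the clique number of $G$. $G\overset{v}{\to}(2_r)$ means that in every partition of $V(G)$ into $r$ pairwise disjoint parts some part contains an edge (equivalently $\chi(G)\ge r+1$). $H_v(2_r;q)$ is the set of graphs $G$ with $G\overset{v}{\to}(2_r)$ and $\mathrm{cl}(G)<q$; $F_v(2_r;q)=\min\{|V(G)|:G\in H_v(2_r;q)\}$. The Ramsey number $R(p,3)$ is the least $n$ such that every graph on at least $n$ vertices has a $p$-clique or an independent set of size $3$. *)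

theory Defs
  imports Main
begin

text \<open>A finite simple graph on natural-number vertices: vertex set V, edges are
  2-element subsets of V. Every finite simple graph is isomorphic to one of these.\<close>
definition sgraph :: "nat set \<Rightarrow> nat set set \<Rightarrow> bool" where
  "sgraph V E \<longleftrightarrow> finite V \<and> E \<subseteq> {{x, y} | x y. x \<in> V \<and> y \<in> V \<and> x \<noteq> y}"

definition is_clique :: "nat set \<Rightarrow> nat set set \<Rightarrow> nat set \<Rightarrow> bool" where
  "is_clique V E K \<longleftrightarrow> K \<subseteq> V \<and> (\<forall>x\<in>K. \<forall>y\<in>K. x \<noteq> y \<longrightarrow> {x, y} \<in> E)"

definition is_indep :: "nat set \<Rightarrow> nat set set \<Rightarrow> nat set \<Rightarrow> bool" where
  "is_indep V E I \<longleftrightarrow> I \<subseteq> V \<and> (\<forall>x\<in>I. \<forall>y\<in>I. x \<noteq> y \<longrightarrow> {x, y} \<notin> E)"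

definition clique_number :: "nat set \<Rightarrow> nat set set \<Rightarrow> nat" where
  "clique_number V E = Max {card K | K. is_clique V E K}"

text \<open>G \<rightarrow>v (2_r): every partition of V into r parts (a map V \<rightarrow> {0..<r})
  has a part containing an edge.\<close>
definition vertex_arrows :: "nat set \<Rightarrow> nat set set \<Rightarrow> nat \<Rightarrow> bool" where
  "vertex_arrows V E r \<longleftrightarrow>
     (\<forall>f :: nat \<Rightarrow> nat. (\<forall>v\<in>V. f v < r) \<longrightarrow>
        (\<exists>x\<in>V. \<exists>y\<in>V. {x, y} \<in> E \<and> f x = f y))"

definition Hv :: "nat \<Rightarrow> nat \<Rightarrow> (nat set \<times> nat set set) set" where
  "Hv r q = {(V, E). sgraph V E \<and> vertex_arrows V E r \<and> clique_number V E < q}"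

definition Fv :: "nat \<Rightarrow> nat \<Rightarrow> nat" where
  "Fv r q = (LEAST n. \<exists>(V, E) \<in> Hv r q. card V = n)"

definition ramsey3 :: "nat \<Rightarrow> nat" where
  "ramsey3 p = (LEAST n. \<forall>V E. sgraph V E \<and> n \<le> card V \<longrightarrow>
      (\<exists>K. is_clique V E K \<and> card K = p) \<or> (\<exists>I. is_indep V E I \<and> card I = 3))"

end

theory Submission
  imports Defs "HOL-Library.Nat_Bijection"
begin


lemma sgraph_edge:
  assumes "sgraph V E" "e \<in> E"
  obtains x y where "e = {x,y}" "x \<in> V" "y \<in> V" "x \<noteq> y"
  using assms unfolding sgraph_def by blast

lemma clique_number_less:
  assumes "sgraph V E"
  shows "clique_number V E < q \<longleftrightarrow> (\<forall>K. is_clique V E K \<longrightarrow> card K < q)"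
proof -
  have fin: "finite V" using assms sgraph_def by blast
  have "{card K | K. is_clique V E K} \<subseteq> card ` Pow V" unfolding is_clique_def by blast
  hence f: "finite {card K | K. is_clique V E K}" using fin finite_subset by blast
  have ne: "{card K | K. is_clique V E K} \<noteq> {}"
    using is_clique_def by (metis (mono_tags, lifting) empty_iff empty_subsetI mem_Collect_eq)
  show ?thesis unfolding clique_number_def using Max_less_iff[OF f ne] by blast
qed

lemma merge:
  assumes G: "sgraph V E" and SV: "S \<subseteq> V" and aS: "a \<in> S" and ind: "is_indep V E S"
    and arr: "vertex_arrows V E r" and cl: "\<forall>K. is_clique V E K \<longrightarrow> card K < p"
  defines "g \<equiv> \<lambda>x. if x \<in> S then a else x"
  defines "V' \<equiv> V - (S - {a})"
  defines "E' \<equiv> (\<lambda>e. g ` e) ` E"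
  shows "sgraph V' E' \<and> vertex_arrows V' E' r \<and> (\<forall>K. is_clique V' E' K \<longrightarrow> card K < Suc p)
     \<and> card V' = card V - (card S - 1)"
proof -
  have fin: "finite V" using G sgraph_def by blast
  have finS: "finite S" using fin SV finite_subset by blast
  have gV: "g x \<in> V'" if "x \<in> V" for x using that aS SV unfolding g_def V'_def by auto
  have edge: "g x \<noteq> g y" if "{x,y} \<in> E" "x \<in> V" "y \<in> V" "x \<noteq> y" for x y
    using that ind aS unfolding g_def is_indep_def by auto
  have s1: "sgraph V' E'"
    unfolding sgraph_def
  proof
    show "finite V'" using fin V'_def by simp
    show "E' \<subseteq> {{x, y} |x y. x \<in> V' \<and> y \<in> V' \<and> x \<noteq> y}"
    proof
      fix e' assume "e' \<in> E'"
      then obtain e where e: "e \<in> E" "e' = g ` e" unfolding E'_def by blast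
      then obtain x y where xy: "e = {x,y}" "x \<in> V" "y \<in> V" "x \<noteq> y" using G sgraph_edge by metis
      have "g x \<in> V'" "g y \<in> V'" "g x \<noteq> g y" "e' = {g x, g y}" using xy e gV edge by auto
      thus "e' \<in> {{x, y} |x y. x \<in> V' \<and> y \<in> V' \<and> x \<noteq> y}" by blast
    qed
  qed
  have s2: "vertex_arrows V' E' r"
    unfolding vertex_arrows_def
  proof (intro allI impI)
    fix f :: "nat \<Rightarrow> nat" assume h: "\<forall>v\<in>V'. f v < r"
    have "\<forall>v\<in>V. (f \<circ> g) v < r" using h gV by auto
    then obtain x y where xy: "x \<in> V" "y \<in> V" "{x,y} \<in> E" "f (g x) = f (g y)"
      using arr unfolding vertex_arrows_def by (metis comp_apply)
    have "{g x, g y} \<in> E'" unfolding E'_def using image_eqI[of "{g x, g y}" "\<lambda>e. g ` e" "{x,y}" E] xy(3) by simp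
    thus "\<exists>x\<in>V'. \<exists>y\<in>V'. {x, y} \<in> E' \<and> f x = f y" using xy gV by blast
  qed
  have s3: "\<forall>K. is_clique V' E' K \<longrightarrow> card K < Suc p"
  proof (intro allI impI)
    fix K assume K: "is_clique V' E' K"
    have "is_clique V E (K - {a})"
      unfolding is_clique_def
    proof
      show "K - {a} \<subseteq> V" using K V'_def is_clique_def by auto
      show "\<forall>x\<in>K - {a}. \<forall>y\<in>K - {a}. x \<noteq> y \<longrightarrow> {x, y} \<in> E"
      proof (intro ballI impI)
        fix x y assume x: "x \<in> K - {a}" and y: "y \<in> K - {a}" and ne: "x \<noteq> y"
        have xS: "x \<notin> S" "y \<notin> S" using x y K unfolding is_clique_def V'_def by auto
        have "{x,y} \<in> E'" using K x y ne unfolding is_clique_def by auto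
        then obtain e where e: "e \<in> E" "{x,y} = g ` e" unfolding E'_def by blast
        then obtain x' y' where x': "e = {x',y'}" using G sgraph_edge by metis
        have "g x' \<in> {x,y}" "g y' \<in> {x,y}" using e x' by auto
        hence "g x' \<noteq> a" "g y' \<noteq> a" using x y by auto
        hence "x' \<notin> S" "y' \<notin> S" unfolding g_def by meson+
        hence "g x' = x'" "g y' = y'" unfolding g_def by simp_all
        hence "{x,y} = e" using e x' by simp
        thus "{x,y} \<in> E" using e by simp
      qed
    qed
    hence "card (K - {a}) < p" using cl by blast
    moreover have "K \<subseteq> V" using K unfolding is_clique_def V'_def by blast
    hence "finite K" using fin finite_subset by blast
    ultimately show "card K < Suc p"
    proof (cases "a \<in> K")
      case True
      then show ?thesis using card_Suc_Diff1[OF \<open>finite K\<close> True] \<open>card (K - {a}) < p\<close> by simp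
    next
      case False
      then show ?thesis using \<open>card (K - {a}) < p\<close> by simp
    qed
  qed
  have s4: "card V' = card V - (card S - 1)"
  proof -
    have "S - {a} \<subseteq> V" using SV by blast
    hence "card (V - (S - {a})) = card V - card (S - {a})" using finS by (simp add: card_Diff_subset)
    thus ?thesis using aS finS by (simp add: V'_def)
  qed
  show ?thesis using s1 s2 s3 s4 by blast
qed

lemma sgraph_noloop: "sgraph V E \<Longrightarrow> {x} \<notin> E"
  unfolding sgraph_def by (auto simp: doubleton_eq_iff)

lemma ramsey_exists:
  "\<exists>n. \<forall>V E. sgraph V E \<and> n \<le> card V \<longrightarrow>
      (\<exists>K. is_clique V E K \<and> card K = p) \<or> (\<exists>I. is_indep V E I \<and> card I = 3)"
proof (induction p)
  case 0
  show ?case by (rule exI[of _ 0]) (auto simp: is_clique_def)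
next
  case (Suc p)
  then obtain n where IH: "\<And>V E. sgraph V E \<Longrightarrow> n \<le> card V \<Longrightarrow>
      (\<exists>K. is_clique V E K \<and> card K = p) \<or> (\<exists>I. is_indep V E I \<and> card I = 3)" by blast
  show ?case
  proof (rule exI[of _ "n + p + 2"], intro allI impI, elim conjE)
    fix V E assume G: "sgraph V E" and cV: "n + p + 2 \<le> card V"
    have fin: "finite V" using G sgraph_def by blast
    have "V \<noteq> {}" using cV by auto
    then obtain v where v: "v \<in> V" by blast
    define N where "N = {u\<in>V. {v,u} \<in> E}"
    define M where "M = V - N - {v}"
    have vN: "v \<notin> N" using sgraph_noloop[OF G] unfolding N_def by simp
    have VNM: "V = insert v (N \<union> M)" using v unfolding M_def N_def by blast
    have finN: "finite N" "finite M" using fin unfolding N_def M_def by auto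
    have "card V = Suc (card N + card M)"
    proof -
      have "card (N \<union> M) = card N + card M" using finN by (intro card_Un_disjoint) (auto simp: M_def)
      moreover have "v \<notin> N \<union> M" using vN M_def by blast
      ultimately show ?thesis using VNM finN by simp
    qed
    hence "n \<le> card N \<or> Suc p \<le> card M" using cV by linarith
    thus "(\<exists>K. is_clique V E K \<and> card K = Suc p) \<or> (\<exists>I. is_indep V E I \<and> card I = 3)"
    proof
      assume cN: "n \<le> card N"
      define EN where "EN = {e\<in>E. e \<subseteq> N}"
      have GN: "sgraph N EN" unfolding sgraph_def
      proof
        show "finite N" using finN by simp
        show "EN \<subseteq> {{x, y} |x y. x \<in> N \<and> y \<in> N \<and> x \<noteq> y}"
        proof
          fix e assume e: "e \<in> EN"
          then obtain x y where "e = {x,y}" "x \<noteq> y" using G sgraph_edge unfolding EN_def by blast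
          thus "e \<in> {{x, y} |x y. x \<in> N \<and> y \<in> N \<and> x \<noteq> y}" using e unfolding EN_def by blast
        qed
      qed
      from IH[OF GN cN] show ?thesis
      proof
        assume "\<exists>K. is_clique N EN K \<and> card K = p"
        then obtain K where K: "is_clique N EN K" "card K = p" by blast
        have KN: "K \<subseteq> N" using K is_clique_def by blast
        have "is_clique V E (insert v K)"
          unfolding is_clique_def
        proof
          show "insert v K \<subseteq> V" using KN v N_def by blast
          show "\<forall>x\<in>insert v K. \<forall>y\<in>insert v K. x \<noteq> y \<longrightarrow> {x, y} \<in> E"
          proof (intro ballI impI)
            fix x y assume x: "x \<in> insert v K" and y: "y \<in> insert v K" and ne: "x \<noteq> y"
            show "{x, y} \<in> E"
            proof (cases "x = v")
              case True
              then show ?thesis using y ne KN N_def by auto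
            next
              case False
              note xK = this
              show ?thesis
              proof (cases "y = v")
                case True
                then show ?thesis using x xK KN N_def by (auto simp: insert_commute)
              next
                case False
                then show ?thesis using x y xK ne K(1) unfolding is_clique_def EN_def by auto
              qed
            qed
          qed
        qed
        moreover have "card (insert v K) = Suc p"
          using K KN vN finN finite_subset by (metis card_insert_disjoint subsetD)
        ultimately show ?thesis by blast
      next
        assume "\<exists>I. is_indep N EN I \<and> card I = 3"
        then obtain I where I: "is_indep N EN I" "card I = 3" by blast
        have "is_indep V E I" using I(1) unfolding is_indep_def EN_def N_def by auto
        thus ?thesis using I(2) by blast
      qed
    next
      assume cM: "Suc p \<le> card M"
      show ?thesis
      proof (cases "\<exists>x\<in>M. \<exists>y\<in>M. x \<noteq> y \<and> {x,y} \<notin> E")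
        case True
        then obtain x y where xy: "x \<in> M" "y \<in> M" "x \<noteq> y" "{x,y} \<notin> E" by blast
        have "is_indep V E {v,x,y}"
          using xy v unfolding is_indep_def M_def N_def by (auto simp: insert_commute)
        moreover have "card {v,x,y} = 3" using xy unfolding M_def by auto
        ultimately show ?thesis by blast
      next
        case False
        obtain K where K: "K \<subseteq> M" "card K = Suc p" using obtain_subset_with_card_n[OF cM] by blast
        have "is_clique V E K" using K(1) False unfolding is_clique_def M_def by blast
        thus ?thesis using K by blast
      qed
    qed
  qed
qed



definition shiftV :: "nat \<Rightarrow> nat set" where
  "shiftV N = prod_encode ` {(i,j). i < j \<and> j < N}"
definition shiftE :: "nat \<Rightarrow> nat set set" where
  "shiftE N = {{prod_encode (i,j), prod_encode (j,k)} | i j k. i < j \<and> j < k \<and> k < N}"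

lemma shift_sgraph: "sgraph (shiftV N) (shiftE N)"
  unfolding sgraph_def
proof
  have "{(i,j). i < j \<and> j < N} \<subseteq> {0..<N} \<times> {0..<N}" by auto
  hence "finite {(i::nat,j). i < j \<and> j < N}" using finite_subset by blast
  thus "finite (shiftV N)" unfolding shiftV_def by simp
  show "shiftE N \<subseteq> {{x, y} |x y. x \<in> shiftV N \<and> y \<in> shiftV N \<and> x \<noteq> y}"
  proof
    fix e assume "e \<in> shiftE N"
    then obtain i j k where e: "e = {prod_encode (i,j), prod_encode (j,k)}" "i < j" "j < k" "k < N"
      unfolding shiftE_def by blast
    have "prod_encode (i,j) \<in> shiftV N" "prod_encode (j,k) \<in> shiftV N"
      unfolding shiftV_def using e by auto
    moreover have "prod_encode (i,j) \<noteq> prod_encode (j,k)" using e by simp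
    ultimately show "e \<in> {{x, y} |x y. x \<in> shiftV N \<and> y \<in> shiftV N \<and> x \<noteq> y}" using e(1) by blast
  qed
qed

lemma shift_adj:
  assumes "{prod_encode (a,b), prod_encode (c,d)} \<in> shiftE N"
  shows "b = c \<or> d = a"
proof -
  obtain i j k where e: "{prod_encode (a,b), prod_encode (c,d)} = {prod_encode (i,j), prod_encode (j,k)}"
    using assms unfolding shiftE_def by blast
  thus ?thesis by (auto simp: doubleton_eq_iff)
qed

lemma shift_clique:
  assumes K: "is_clique (shiftV N) (shiftE N) K"
  shows "card K < 3"
proof (rule ccontr)
  assume "\<not> card K < 3"
  then obtain K3 where K3: "K3 \<subseteq> K" "card K3 = 3" using obtain_subset_with_card_n[of 3 K] by auto
  then obtain x y z where xyz: "K3 = {x,y,z}" "x \<noteq> y" "y \<noteq> z" "x \<noteq> z" by (auto simp: card_3_iff)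
  have inV: "x \<in> shiftV N" "y \<in> shiftV N" "z \<in> shiftV N" using K K3 xyz unfolding is_clique_def by auto
  then obtain a1 b1 a2 b2 a3 b3 where p: "x = prod_encode (a1,b1)" "a1 < b1"
    "y = prod_encode (a2,b2)" "a2 < b2" "z = prod_encode (a3,b3)" "a3 < b3"
    unfolding shiftV_def by blast
  have e: "{x,y} \<in> shiftE N" "{x,z} \<in> shiftE N" "{y,z} \<in> shiftE N"
    using K K3 xyz unfolding is_clique_def by auto
  have "b1 = a2 \<or> b2 = a1" using shift_adj e(1) p by simp
  moreover have "b1 = a3 \<or> b3 = a1" using shift_adj e(2) p by simp
  moreover have "b2 = a3 \<or> b3 = a2" using shift_adj e(3) p by simp
  moreover have "(a1,b1) \<noteq> (a2,b2)" "(a1,b1) \<noteq> (a3,b3)" "(a2,b2) \<noteq> (a3,b3)" using xyz p by auto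
  ultimately show False using p by auto
qed

lemma shift_arrows:
  assumes N: "N = 2 ^ r + 1"
  shows "vertex_arrows (shiftV N) (shiftE N) r"
  unfolding vertex_arrows_def
proof (intro allI impI, rule ccontr)
  fix f :: "nat \<Rightarrow> nat"
  assume f: "\<forall>v\<in>shiftV N. f v < r"
    and no: "\<not> (\<exists>x\<in>shiftV N. \<exists>y\<in>shiftV N. {x, y} \<in> shiftE N \<and> f x = f y)"
  define A where "A i = {f (prod_encode (i,j)) | j. i < j \<and> j < N}" for i
  have key: "A i \<noteq> A j" if "i < j" "j < N" for i j
  proof
    assume eq: "A i = A j"
    have "f (prod_encode (i,j)) \<in> A i" using that unfolding A_def by blast
    hence "f (prod_encode (i,j)) \<in> A j" using eq by simp
    then obtain k where k: "j < k" "k < N" "f (prod_encode (i,j)) = f (prod_encode (j,k))"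
      unfolding A_def by blast
    have "{prod_encode (i,j), prod_encode (j,k)} \<in> shiftE N"
      unfolding shiftE_def using that k by blast
    moreover have "prod_encode (i,j) \<in> shiftV N" "prod_encode (j,k) \<in> shiftV N"
      unfolding shiftV_def using that k by auto
    ultimately show False using no k(3) by blast
  qed
  have inj: "inj_on A {0..<N}"
  proof (rule inj_onI)
    fix i j assume "i \<in> {0..<N}" "j \<in> {0..<N}" "A i = A j"
    thus "i = j" using key by (metis atLeastLessThan_iff linorder_neqE_nat)
  qed
  have sub: "A ` {0..<N} \<subseteq> Pow {0..<r}"
  proof
    fix S assume "S \<in> A ` {0..<N}"
    then obtain i where i: "i < N" "S = A i" by auto
    have "S \<subseteq> {0..<r}"
    proof
      fix c assume "c \<in> S"
      then obtain j where "i < j" "j < N" "c = f (prod_encode (i,j))" using i unfolding A_def by blast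
      moreover have "prod_encode (i,j) \<in> shiftV N" unfolding shiftV_def using calculation by auto
      ultimately show "c \<in> {0..<r}" using f by auto
    qed
    thus "S \<in> Pow {0..<r}" by simp
  qed
  have "card {0..<N} \<le> card (Pow {0..<r})"
    using card_inj_on_le[OF inj sub] by simp
  hence "N \<le> 2 ^ r" by (simp add: card_Pow)
  thus False using N by simp
qed


lemma Fv_le: "(V,E) \<in> Hv r q \<Longrightarrow> Fv r q \<le> card V"
  unfolding Fv_def by (rule Least_le) blast

theorem corollary2p1:
  fixes q r :: nat
  assumes "4 \<le> q" and "q < r + 3"
  shows "Fv r (q - 1) \<ge> Fv r q + 1 \<and>
         (Fv r q + 1 \<ge> ramsey3 (q - 1) \<longrightarrow> Fv r (q - 1) \<ge> Fv r q + 2)"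
proof -
  define N where "N = 2 ^ r + (1::nat)"
  have "\<forall>K. is_clique (shiftV N) (shiftE N) K \<longrightarrow> card K < q - 1"
  proof (intro allI impI)
    fix K assume "is_clique (shiftV N) (shiftE N) K"
    hence "card K < 3" by (rule shift_clique)
    moreover have "3 \<le> q - 1" using assms(1) by simp
    ultimately show "card K < q - 1" by linarith
  qed
  hence "clique_number (shiftV N) (shiftE N) < q - 1"
    using clique_number_less[OF shift_sgraph] by blast
  hence "(shiftV N, shiftE N) \<in> Hv r (q - 1)"
    unfolding Hv_def using shift_sgraph shift_arrows[OF N_def] by blast
  hence ex: "\<exists>n. \<exists>(V, E) \<in> Hv r (q - 1). card V = n" by blast
  define n where "n = Fv r (q - 1)"
  have "\<exists>(V, E) \<in> Hv r (q - 1). card V = n"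
    unfolding n_def Fv_def by (rule LeastI_ex[OF ex])
  then obtain V E where VE: "(V,E) \<in> Hv r (q - 1)" "card V = n" by blast
  have G: "sgraph V E" and arr: "vertex_arrows V E r" and cl: "\<forall>K. is_clique V E K \<longrightarrow> card K < q - 1"
    using VE(1) clique_number_less unfolding Hv_def by auto
  have fin: "finite V" using G sgraph_def by blast
  have toHv: "(V', E') \<in> Hv r q" if "sgraph V' E'" "vertex_arrows V' E' r"
      "\<forall>K. is_clique V' E' K \<longrightarrow> card K < Suc (q - 1)" for V' E'
    using that clique_number_less[OF that(1)] assms(1) unfolding Hv_def by auto
  have partA: "Fv r q + 1 \<le> n"
  proof -
    have "\<exists>u\<in>V. \<exists>w\<in>V. u \<noteq> w \<and> {u,w} \<notin> E"
    proof (rule ccontr)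
      assume "\<not> ?thesis"
      hence "is_clique V E V" unfolding is_clique_def by blast
      hence "card V < q - 1" using cl by blast
      hence cV: "card V \<le> r" using assms(2) by linarith
      obtain h where h: "bij_betw h V {0..<card V}" using ex_bij_betw_finite_nat[OF fin] by blast
      have "\<forall>v\<in>V. h v < r"
      proof
        fix v assume "v \<in> V"
        hence "h v \<in> {0..<card V}" using h bij_betwE by blast
        thus "h v < r" using cV by simp
      qed
      then obtain x y where xy: "x \<in> V" "y \<in> V" "{x,y} \<in> E" "h x = h y"
        using arr unfolding vertex_arrows_def by blast
      have "inj_on h V" using h bij_betw_imp_inj_on by blast
      hence "x = y" using xy inj_onD by metis
      thus False using xy sgraph_noloop[OF G] by simp
    qed
    then obtain u w where uw: "u \<in> V" "w \<in> V" "u \<noteq> w" "{u,w} \<notin> E" by blast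
    have ind: "is_indep V E {u,w}" using uw unfolding is_indep_def by (auto simp: insert_commute)
    have "{u,w} \<subseteq> V" "u \<in> {u,w}" using uw by auto
    from merge[OF G this ind arr cl]
    obtain V' E' where "sgraph V' E'" "vertex_arrows V' E' r"
      "\<forall>K. is_clique V' E' K \<longrightarrow> card K < Suc (q - 1)" "card V' = card V - (card {u,w} - 1)"
      by blast
    hence "(V', E') \<in> Hv r q" "card V' = n - 1" using toHv uw VE(2) by auto
    hence "Fv r q \<le> n - 1" using Fv_le by metis
    moreover have "2 \<le> n"
    proof -
      have "card {u,w} \<le> card V" using fin uw by (intro card_mono) auto
      thus ?thesis using uw VE(2) by simp
    qed
    ultimately show ?thesis by linarith
  qed
  have partB: "Fv r q + 2 \<le> n" if h: "ramsey3 (q - 1) \<le> Fv r q + 1"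
  proof -
    let ?P = "\<lambda>n. \<forall>V E. sgraph V E \<and> n \<le> card V \<longrightarrow>
      (\<exists>K. is_clique V E K \<and> card K = q - 1) \<or> (\<exists>I. is_indep V E I \<and> card I = 3)"
    have "?P (ramsey3 (q - 1))" unfolding ramsey3_def by (rule LeastI_ex[OF ramsey_exists])
    moreover have "ramsey3 (q - 1) \<le> card V" using h partA VE(2) by linarith
    ultimately have "(\<exists>K. is_clique V E K \<and> card K = q - 1) \<or> (\<exists>I. is_indep V E I \<and> card I = 3)"
      using G by blast
    moreover have "\<not> (\<exists>K. is_clique V E K \<and> card K = q - 1)" using cl by (metis less_irrefl)
    ultimately obtain I where I: "is_indep V E I" "card I = 3" by blast
    hence "I \<noteq> {}" by auto
    then obtain a where a: "a \<in> I" by blast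
    have IV: "I \<subseteq> V" using I is_indep_def by blast
    from merge[OF G IV a I(1) arr cl]
    obtain V' E' where "sgraph V' E'" "vertex_arrows V' E' r"
      "\<forall>K. is_clique V' E' K \<longrightarrow> card K < Suc (q - 1)" "card V' = card V - (card I - 1)"
      by blast
    hence "(V', E') \<in> Hv r q" "card V' = n - 2" using toHv I(2) VE(2) by auto
    hence "Fv r q \<le> n - 2" using Fv_le by metis
    moreover have "3 \<le> n" using card_mono[OF fin IV] I(2) VE(2) by simp
    ultimately show ?thesis by linarith
  qed
  show ?thesis using partA partB n_def by simp
qed

end
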